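(* Let $f:\mathbb{R}^N\to\mathbb{R}$ be continuous with $\operatorname{argmin} f\neq\emptyset$. Let $p>1$, $\mu>0$, and suppose $f$ is globally $p$-Łojasiewicz with constant $\mu$, i.e., with $\frac1p+\frac1q=1$, $$(\forall x\in\mathbb{R}^N)(\forall x^*\in\partial_L f(x))\quad f(x)-\inf f \le \frac{1}{q\,\mu^{q/p}}\|x^*\|^q.$$ Then for all $x\in\mathbb{R}^N$, $$\frac{1}{(p-1)^{p-1}}\frac{\mu}{p}\, d_{\operatorname{argmin} f}(x)^p \le f(x)-\inf f.$$
   Context: For a closed set $S\subset\mathbb{R}^N$, $d_S(x) := \inf_{y\in S}\|y-x\|$ (Euclidean norm). For $g:\mathbb{R}^N\to\mathbb{R}$, the Fréchet subdifferential $\partial_F g(x)$ is the set of $x^*$ with $\liminf_{y\to x} \frac{g(y)-g(x)-\langle x^*,y-x\rangle}{\|y-x\|}\ge 0$; the limiting subdifferential $\partial_L g(x)$ is the set of $x^*$ for which there exist $x_n\to x$ and $x_n^*\to x^*$ with $g(x_n)\to g(x)$ and $x_n^*\in\partial_F g(x_n)$. *)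

theory Defs
  imports "HOL-Analysis.Analysis" "HOL-Library.Liminf_Limsup"
begin

definition frechet_subdiff :: "('a::euclidean_space \<Rightarrow> real) \<Rightarrow> 'a \<Rightarrow> 'a set" where
  "frechet_subdiff g x = {xs. Liminf (at x)
      (\<lambda>y. ereal ((g y - g x - inner xs (y - x)) / norm (y - x))) \<ge> 0}"

definition limiting_subdiff :: "('a::euclidean_space \<Rightarrow> real) \<Rightarrow> 'a \<Rightarrow> 'a set" where
  "limiting_subdiff g x = {xs. \<exists>xn xsn. xn \<longlonglongrightarrow> x \<and> xsn \<longlonglongrightarrow> xs \<and>
      (\<lambda>n. g (xn n)) \<longlonglongrightarrow> g x \<and> (\<forall>n. xsn n \<in> frechet_subdiff g (xn n))}"

definition argmin_set :: "('a \<Rightarrow> real) \<Rightarrow> 'a set" where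
  "argmin_set f = {x. \<forall>y. f x \<le> f y}"

end

theory Submission
  imports Defs
begin

lemma aux_alg: "(P::real) * t0 = A \<Longrightarrow> (a*t + (1-a)*t0)*P = A + a*P*(t-t0)"
  by (simp add: algebra_simps)

lemma aux_div: "0 < (c::real) \<Longrightarrow> A \<le> c * W \<Longrightarrow> A / c \<le> W"
  by (simp add: pos_divide_le_eq mult.commute)

lemma tangent_powr:
  fixes a t t0 :: real
  assumes "0 < a" "a < 1" "0 \<le> t" "0 < t0"
  shows "t powr a \<le> t0 powr a + a * t0 powr (a - 1) * (t - t0)"
proof -
  have e1: "t0 powr (a - 1) * t0 = t0 powr a"
  proof -
    have "t0 powr (a - 1) * t0 powr 1 = t0 powr (a - 1 + 1)" by (rule powr_add[symmetric])
    moreover have "t0 powr 1 = t0" using assms by simp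
    ultimately show ?thesis by simp
  qed
  have e2: "t0 powr (1 - a) * t0 powr (a - 1) = 1"
    using assms by (simp add: powr_add[symmetric])
  show ?thesis
  proof (cases "t = 0")
    case True
    then show ?thesis using assms e1 by (simp add: algebra_simps)
  next
    case False
    then have tp: "t > 0" using assms by simp
    have Y: "t powr a * t0 powr (1 - a) \<le> a * t + (1 - a) * t0"
      using Youngs_inequality_0[of a "1 - a" t t0] assms tp by simp
    have "t powr a = t powr a * t0 powr (1 - a) * t0 powr (a - 1)"
      using e2 by (metis mult.assoc mult.right_neutral)
    also have "\<dots> \<le> (a * t + (1 - a) * t0) * t0 powr (a - 1)"
      using Y by (rule mult_right_mono) simp
    also have "\<dots> = t0 powr a + a * t0 powr (a - 1) * (t - t0)"
      using e1 by (rule aux_alg)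
    finally show ?thesis .
  qed
qed

lemma tangent_sqrt:
  fixes u u0 :: real
  assumes "0 < u0" "0 \<le> u"
  shows "sqrt u \<le> sqrt u0 + (u - u0) / (2 * sqrt u0)"
proof -
  have s0: "sqrt u0 > 0" using assms by simp
  have "0 \<le> (sqrt u - sqrt u0)^2" by simp
  then have "2 * sqrt u * sqrt u0 \<le> u + u0"
    using assms by (simp add: power2_eq_square algebra_simps)
  moreover have "2 * sqrt u0 * (sqrt u0 + (u - u0) / (2 * sqrt u0)) = u + u0"
    using s0 assms by (simp add: field_simps)
  ultimately have "2 * sqrt u0 * sqrt u \<le> 2 * sqrt u0 * (sqrt u0 + (u - u0) / (2 * sqrt u0))"
    by (simp add: algebra_simps)
  then show ?thesis using s0 by simp
qed

lemma liminf_nonneg: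
  fixes Q :: "'a::real_normed_vector \<Rightarrow> real"
  assumes "\<rho> > 0" "L \<ge> 0"
    and "\<And>z. z \<noteq> y \<Longrightarrow> dist z y < \<rho> \<Longrightarrow> Q z \<ge> - L * dist z y"
  shows "0 \<le> Liminf (at y) (\<lambda>z. ereal (Q z))"
proof (subst le_Liminf_iff, intro allI impI)
  fix w :: ereal assume "w < 0"
  then obtain r where r: "w < ereal r" "ereal r < 0"
    using ereal_dense2 by blast
  define e where "e = - r"
  have e: "e > 0" "w < ereal (- e)" using r by (auto simp: e_def)
  define r where "r = min \<rho> (e / (L + 1))"
  have r: "r > 0" using assms e by (simp add: r_def)
  show "\<forall>\<^sub>F z in at y. w < ereal (Q z)"
    unfolding eventually_at
  proof (intro exI[of _ r] conjI r ballI impI)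
    fix z assume z: "z \<in> UNIV" "z \<noteq> y \<and> dist z y < r"
    have "L * dist z y \<le> (L + 1) * dist z y" by (simp add: algebra_simps)
    also have "\<dots> < (L + 1) * (e / (L + 1))"
      using z assms by (intro mult_strict_left_mono) (auto simp: r_def)
    also have "\<dots> = e" using assms by simp
    finally have "Q z > - e" using assms(3)[of z] z by (auto simp: r_def)
    then have "ereal (- e) < ereal (Q z)" by simp
    then show "w < ereal (Q z)" using e(2) by (rule less_trans[rotated])
  qed
qed


lemma eta_pow:
  fixes p \<mu> q K \<eta> :: real
  assumes "p > 1" "\<mu> > 0" "q = p / (p - 1)"
    and "K = 1 / (q * \<mu> powr (q / p))" and "\<eta> = (1 / (K * p powr q)) powr (1 / q)"
  shows "\<eta> powr p = 1 / (p - 1) powr (p - 1) * (\<mu> / p)"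
proof -
  have q0: "q > 0" using assms by simp
  have pq: "p / q = p - 1" unfolding assms(3) using assms(1) by (simp add: field_simps)
  have qp: "q / p * (p - 1) = 1" unfolding assms(3) using assms(1) by (simp add: field_simps)
  have qp2: "q * (p - 1) = p" unfolding assms(3) using assms(1) by (simp add: field_simps)
  have B: "1 / (K * p powr q) = q * \<mu> powr (q / p) / p powr q"
    using assms by simp
  have "\<eta> powr p = (1 / (K * p powr q)) powr (1 / q * p)"
    using assms q0 by (simp add: powr_powr)
  also have "1 / q * p = p - 1" using pq by simp
  also have "(1 / (K * p powr q)) powr (p - 1) = q powr (p - 1) * (\<mu> powr (q / p)) powr (p - 1) / (p powr q) powr (p - 1)"
    unfolding B using assms q0 by (simp add: powr_mult powr_divide)
  also have "(\<mu> powr (q / p)) powr (p - 1) = \<mu>"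
    using qp assms by (simp add: powr_powr)
  also have "(p powr q) powr (p - 1) = p powr (p - 1) * p"
  proof -
    have "(p powr q) powr (p - 1) = p powr (q * (p - 1))" by (simp add: powr_powr)
    also have "\<dots> = p powr ((p - 1) + 1)" using qp2 by simp
    also have "\<dots> = p powr (p - 1) * p powr 1" by (rule powr_add)
    also have "p powr 1 = p" using assms by simp
    finally show ?thesis .
  qed
  also have "q powr (p - 1) = p powr (p - 1) / (p - 1) powr (p - 1)"
    using assms by (simp add: powr_divide)
  finally have E: "\<eta> powr p = p powr (p - 1) / (p - 1) powr (p - 1) * \<mu> / (p powr (p - 1) * p)" .
  have "p powr (p - 1) > 0" using assms by simp
  then show ?thesis unfolding E using assms(1,2) by (simp add: field_simps)
qed

lemma key_bound:
  fixes g :: "'a::euclidean_space \<Rightarrow> real" and S :: "'a set"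
  assumes gc: "continuous_on UNIV g" and g0: "\<And>z. g z \<ge> 0"
    and gS: "\<And>z. g z = 0 \<Longrightarrow> z \<in> S"
    and a: "0 < a" "a < 1" and eta: "\<eta> > 0" and dl: "\<delta> > 0"
    and nogo: "\<And>y v. g y > 0 \<Longrightarrow> norm v < \<eta> / (a * g y powr (a - 1)) \<Longrightarrow>
         0 \<le> Liminf (at y) (\<lambda>z. ereal ((g z - g y - inner v (z - y)) / norm (z - y))) \<Longrightarrow> False"
  shows "infdist x0 S \<le> g x0 powr a / \<eta> + \<delta>"
proof -
  define s where "s z = sqrt (norm (z - x0)^2 + \<delta>^2)" for z
  define \<Phi> where "\<Phi> z = g z powr a + \<eta> * s z" for z
  have s_ge: "s z \<ge> norm (z - x0)" for z
    unfolding s_def by (rule real_le_rsqrt) simp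
  have s_gt: "s z > norm (z - x0)" for z
    unfolding s_def using dl by (intro real_less_rsqrt) simp
  have s_del: "s z \<ge> \<delta>" for z
    unfolding s_def by (rule real_le_rsqrt) simp
  have sx0: "s x0 = \<delta>" using dl by (simp add: s_def)
  have Phi_ge: "\<Phi> z \<ge> \<eta> * norm (z - x0)" for z
  proof -
    have "\<eta> * norm (z - x0) \<le> \<eta> * s z" using s_ge eta by simp
    then show ?thesis unfolding \<Phi>_def by (smt (verit) powr_ge_zero)
  qed
  have contPhi: "continuous_on UNIV \<Phi>"
    unfolding \<Phi>_def s_def
    by (intro continuous_intros continuous_on_powr' gc) (use g0 a in auto)
  define R where "R = (\<Phi> x0 + 1) / \<eta>"
  have "R \<ge> 0" using Phi_ge[of x0] eta by (simp add: R_def)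
  then have x0C: "x0 \<in> cball x0 R" by simp
  obtain y where yC: "y \<in> cball x0 R" and ymin0: "\<And>z. z \<in> cball x0 R \<Longrightarrow> \<Phi> y \<le> \<Phi> z"
    using continuous_attains_inf[of "cball x0 R" \<Phi>] contPhi x0C
    by (metis compact_cball continuous_on_subset empty_iff top_greatest)
  have ymin: "\<Phi> y \<le> \<Phi> z" for z
  proof (cases "z \<in> cball x0 R")
    case True then show ?thesis by (rule ymin0)
  next
    case False
    then have "norm (z - x0) > R" by (simp add: dist_norm norm_minus_commute)
    then have "\<eta> * norm (z - x0) > \<eta> * R" using eta by simp
    also have "\<eta> * R = \<Phi> x0 + 1" using eta by (simp add: R_def)
    finally show ?thesis using Phi_ge[of z] ymin0[OF x0C] by linarith
  qed
  have gy0: "g y = 0"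
  proof (rule ccontr)
    assume "g y \<noteq> 0"
    then have gy: "g y > 0" using g0[of y] by simp
    define c where "c = a * g y powr (a - 1)"
    have c0: "c > 0" using a gy by (simp add: c_def)
    define b where "b = y - x0"
    have sy0: "s y > 0" using s_del[of y] dl by simp
    define v where "v = - (\<eta> / (c * s y)) *\<^sub>R b"
    have nv: "norm v < \<eta> / c"
    proof -
      have "norm v = \<eta> / (c * s y) * norm b" using eta c0 sy0 by (simp add: v_def)
      also have "\<dots> < \<eta> / (c * s y) * s y"
        using s_gt[of y] eta c0 sy0 by (intro mult_strict_left_mono) (auto simp: b_def)
      also have "\<dots> = \<eta> / c" using sy0 by simp
      finally show ?thesis .
    qed
    define L where "L = \<eta> / (2 * c * \<delta>)"
    have L0: "L \<ge> 0" using eta c0 dl by (simp add: L_def)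
    have "0 \<le> Liminf (at y) (\<lambda>z. ereal ((g z - g y - inner v (z - y)) / norm (z - y)))"
    proof (rule liminf_nonneg[of 1 L])
      fix z assume zy: "z \<noteq> y"
      define D where "D = z - y"
      have nD: "norm D > 0" using zy by (simp add: D_def)
      have mn: "g z powr a + \<eta> * s z \<ge> g y powr a + \<eta> * s y"
        using ymin[of z] by (simp add: \<Phi>_def)
      have tg: "g z powr a \<le> g y powr a + c * (g z - g y)"
        unfolding c_def using tangent_powr[OF a g0[of z] gy] by simp
      have zx: "z - x0 = b + D" by (simp add: b_def D_def)
      have nsq: "norm (b + D)^2 = norm b ^2 + 2 * inner b D + norm D ^2"
        by (simp add: power2_norm_eq_inner inner_add inner_commute algebra_simps)
      have sq: "s z \<le> s y + (2 * inner b D + norm D ^2) / (2 * s y)"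
      proof -
        have "s z \<le> s y + ((norm (z - x0)^2 + \<delta>^2) - (norm (y - x0)^2 + \<delta>^2)) / (2 * s y)"
          unfolding s_def using dl by (intro tangent_sqrt) (auto intro!: add_nonneg_pos)
        then show ?thesis using zx nsq by (simp add: b_def)
      qed
      have st1: "c * (g z - g y) \<ge> - \<eta> * ((2 * inner b D + norm D ^2) / (2 * s y))"
      proof -
        define X where "X = (2 * inner b D + norm D ^2) / (2 * s y)"
        have "\<eta> * s z \<le> \<eta> * (s y + X)"
          using sq eta by (simp add: X_def)
        then have "\<eta> * s z \<le> \<eta> * s y + \<eta> * X" by (simp add: distrib_left)
        moreover have "c * (g z - g y) = c * g z - c * g y" by (simp add: algebra_simps)
        ultimately have "c * (g z - g y) \<ge> - (\<eta> * X)" using mn tg by linarith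
        then show ?thesis by (simp add: X_def)
      qed
      have ivD: "inner v D = - (\<eta> / (c * s y)) * inner b D" by (simp add: v_def)
      have st2: "g z - g y - inner v D \<ge> - (\<eta> / (2 * c * s y)) * norm D ^2"
      proof -
        have "g z - g y \<ge> - \<eta> * ((2 * inner b D + norm D ^2) / (2 * s y)) / c"
          by (rule aux_div[OF c0 st1])
        moreover have "- \<eta> * ((2 * inner b D + norm D ^2) / (2 * s y)) / c
            = - (\<eta> / (c * s y)) * inner b D - (\<eta> / (2 * c * s y)) * norm D ^2"
          using c0 sy0 by (simp add: field_simps)
        ultimately show ?thesis using ivD by simp
      qed
      have st3: "(\<eta> / (2 * c * s y)) \<le> L"
        unfolding L_def using c0 s_del[of y] dl eta
        by (intro divide_left_mono mult_left_mono) auto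
      have st4: "g z - g y - inner v D \<ge> - L * norm D ^2"
        using st2 st3 by (smt (verit) mult_right_mono zero_le_power2)
      have "(g z - g y - inner v D) / norm D \<ge> - L * norm D ^2 / norm D"
        using divide_right_mono[OF st4, of "norm D"] by simp
      also have "- L * norm D ^2 / norm D = - L * norm D"
        using nD by (simp add: power2_eq_square)
      finally show "- L * dist z y \<le> (g z - g y - inner v (z - y)) / norm (z - y)"
        by (simp add: D_def dist_norm)
    qed (use L0 in auto)
    then show False using nogo[OF gy] nv by (simp add: c_def)
  qed
  then have yS: "y \<in> S" by (rule gS)
  have "infdist x0 S \<le> dist x0 y" using yS by (rule infdist_le)
  also have "\<dots> \<le> s y" using s_ge[of y] by (simp add: dist_norm norm_minus_commute)
  also have "\<dots> \<le> g x0 powr a / \<eta> + \<delta>"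
  proof -
    have "\<eta> * s y \<le> \<Phi> y" using gy0 by (simp add: \<Phi>_def)
    also have "\<dots> \<le> \<Phi> x0" by (rule ymin)
    also have "\<dots> = g x0 powr a + \<eta> * \<delta>" by (simp add: \<Phi>_def sx0)
    finally show ?thesis using eta by (simp add: field_simps)
  qed
  finally show ?thesis .
qed

theorem theorem3:
  fixes f :: "'a::euclidean_space \<Rightarrow> real" and p q \<mu> :: real
  assumes "continuous_on UNIV f"
    and "argmin_set f \<noteq> {}"
    and "p > 1" and "\<mu> > 0"
    and "1 / p + 1 / q = 1"
    and "\<And>x xs. xs \<in> limiting_subdiff f x \<Longrightarrow>
           f x - (INF y. f y) \<le> 1 / (q * \<mu> powr (q / p)) * norm xs powr q"
  shows "\<And>x. 1 / (p - 1) powr (p - 1) * (\<mu> / p) * infdist x (argmin_set f) powr p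
            \<le> f x - (INF y. f y)"
proof -
  fix x
  obtain xm where xm: "xm \<in> argmin_set f" using assms(2) by blast
  have fxm: "f xm \<le> f y" for y using xm by (simp add: argmin_set_def)
  have m: "(INF y. f y) = f xm"
    by (rule cInf_eq_minimum) (use fxm in auto)
  define g where "g z = f z - f xm" for z
  have g0: "g z \<ge> 0" for z using fxm[of z] by (simp add: g_def)
  have gS: "z \<in> argmin_set f" if "g z = 0" for z
    using that fxm by (simp add: g_def argmin_set_def)
  have gc: "continuous_on UNIV g"
    unfolding g_def by (intro continuous_intros assms(1))
  have p1: "p > 1" by (rule assms(3))
  have qn0: "q \<noteq> 0"
  proof
    assume "q = 0" then show False using assms(5) p1 by simp
  qed
  have h: "1 / q = (p - 1) / p" using assms(5) p1 by (simp add: field_simps)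
  have qdef: "q = p / (p - 1)"
  proof -
    have "q = 1 / (1 / q)" by simp
    also have "\<dots> = p / (p - 1)" unfolding h by simp
    finally show ?thesis .
  qed
  have q0: "q > 0" using qdef p1 by simp
  define a where "a = 1 / p"
  have a: "0 < a" "a < 1" using p1 by (auto simp: a_def)
  have a1q: "(1 - a) * q = 1" using p1 qn0 h by (simp add: a_def field_simps)
  have ap: "a * p = 1" using p1 by (simp add: a_def)
  define K where "K = 1 / (q * \<mu> powr (q / p))"
  have K0: "K > 0" using q0 assms(4) by (simp add: K_def)
  define \<eta> where "\<eta> = (1 / (K * p powr q)) powr (1 / q)"
  have eta0: "\<eta> > 0" using K0 p1 by (simp add: \<eta>_def)
  have etaq: "\<eta> powr q = 1 / (K * p powr q)"
    using K0 p1 q0 by (simp add: \<eta>_def powr_powr)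
  have etap: "\<eta> powr p = 1 / (p - 1) powr (p - 1) * (\<mu> / p)"
    by (rule eta_pow[OF p1 assms(4) qdef K_def \<eta>_def])
  have nogo: False if gy: "g y > 0" and nv: "norm v < \<eta> / (a * g y powr (a - 1))"
      and L: "0 \<le> Liminf (at y) (\<lambda>z. ereal ((g z - g y - inner v (z - y)) / norm (z - y)))"
    for y v
  proof -
    have "v \<in> frechet_subdiff f y"
      using L by (simp add: frechet_subdiff_def g_def)
    then have "v \<in> limiting_subdiff f y"
      unfolding limiting_subdiff_def
      by (intro CollectI exI[of _ "\<lambda>n. y"] exI[of _ "\<lambda>n. v"]) auto
    from assms(6)[OF this] have H: "g y \<le> K * norm v powr q"
      by (simp add: m g_def K_def)
    have "norm v powr q < (\<eta> / (a * g y powr (a - 1))) powr q"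
      using nv q0 by (intro powr_less_mono2) auto
    also have "\<eta> / (a * g y powr (a - 1)) = \<eta> * p * g y powr (1 - a)"
    proof -
      have e: "g y powr (a - 1) * g y powr (1 - a) = 1"
        using gy by (simp add: powr_add[symmetric])
      have P0: "g y powr (a - 1) > 0" using gy by simp
      have Q: "g y powr (1 - a) = 1 / g y powr (a - 1)"
        using e P0 by (simp add: field_simps)
      have "\<eta> / (a * g y powr (a - 1)) = \<eta> * p * (1 / g y powr (a - 1))"
        using P0 p1 by (simp add: a_def)
      then show ?thesis using Q by simp
    qed
    also have "(\<eta> * p * g y powr (1 - a)) powr q = \<eta> powr q * p powr q * g y"
      using gy p1 eta0 a1q by (simp add: powr_mult powr_powr)
    finally have "K * norm v powr q < K * (\<eta> powr q * p powr q * g y)"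
      using K0 by simp
    also have "\<dots> = g y" using K0 p1 by (simp add: etaq)
    finally show False using H by simp
  qed
  show "1 / (p - 1) powr (p - 1) * (\<mu> / p) * infdist x (argmin_set f) powr p
            \<le> f x - (INF y. f y)"
  proof (cases "g x = 0")
    case True
    then have "x \<in> argmin_set f" by (rule gS)
    then show ?thesis using True by (simp add: m g_def)
  next
    case False
    then have gx: "g x > 0" using g0[of x] by simp
    have dle: "infdist x (argmin_set f) \<le> g x powr a / \<eta>"
    proof (rule field_le_epsilon)
      fix e :: real assume "e > 0"
      then show "infdist x (argmin_set f) \<le> g x powr a / \<eta> + e"
        using key_bound[where g=g and S="argmin_set f" and a=a and \<eta>=\<eta> and \<delta>=e]
          gc g0 gS a eta0 nogo by blast
    qed
    have "infdist x (argmin_set f) powr p \<le> (g x powr a / \<eta>) powr p"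
      using dle p1 by (intro powr_mono2) (auto simp: infdist_nonneg)
    also have "\<dots> = g x / \<eta> powr p"
      using gx eta0 ap by (simp add: powr_divide powr_powr)
    finally have "\<eta> powr p * infdist x (argmin_set f) powr p \<le> g x"
      using eta0 by (simp add: field_simps)
    then show ?thesis using etap by (simp add: m g_def)
  qed
qed

end
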